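(* Let $\mathcal{P}=\{1,\dots,p\}$ and let $M(1),\dots,M(p)\in\mathbb{R}^{n\times n}$ be exponentially stable (Hurwitz) matrices. Let $\tau_D>0$ and $\lambda>0$. Then there exists $g_0>0$ such that for every $g\ge g_0$ there is a constant $c>0$ such that, for every switching signal $\sigma\in\mathcal{S}(\tau_D)$ and every initial condition, the solution of $\dot x=gM(\sigma(t))x$ satisfies $\|x(t)\|\le c\,e^{-\lambda t}\|x(0)\|$ for all $t\ge0$.
   Context: A switching signal is a piecewise-constant, right-continuous map $\sigma:[0,\infty)\to\mathcal{P}$ with finitely many discontinuities on each bounded interval; $\mathcal{S}(\tau_D)$ is the set of switching signals whose consecutive discontinuity times $t_1<t_2<\cdots$ (with $t_0=0$) satisfy $t_{k+1}-t_k\ge\tau_D$ for all $k\ge0$. $\|\cdot\|$ is any vector norm (with induced matrix norm). *)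

theory Defs
  imports "HOL-Analysis.Analysis"
begin

definition hurwitz :: "real^'n^'n \<Rightarrow> bool" where
  "hurwitz M \<longleftrightarrow>
     (\<forall>z::complex. det (mat z - (\<chi> i j. complex_of_real (M $ i $ j))) = 0 \<longrightarrow> Re z < 0)"

definition switch_times :: "(real \<Rightarrow> nat) \<Rightarrow> real set" where
  "switch_times \<sigma> = {t. t > 0 \<and> \<not> continuous (at t within {0..}) \<sigma>}"

definition dwell_signal :: "nat \<Rightarrow> real \<Rightarrow> (real \<Rightarrow> nat) \<Rightarrow> bool" where
  "dwell_signal p tauD \<sigma> \<longleftrightarrow>
     (\<forall>t\<ge>0. \<sigma> t \<in> {1..p}) \<and>
     (\<forall>t\<ge>0. continuous (at_right t) \<sigma>) \<and>
     (\<forall>T. finite (switch_times \<sigma> \<inter> {0..T})) \<and>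
     (\<forall>s\<in>insert 0 (switch_times \<sigma>). \<forall>t\<in>insert 0 (switch_times \<sigma>).
         s \<noteq> t \<longrightarrow> tauD \<le> \<bar>s - t\<bar>)"

end

theory Submission
  imports Defs "Jordan_Normal_Form.Spectral_Radius"
begin

lemma exists_ab:
  fixes Z :: "complex set"
  assumes fin: "finite Z" and neg: "\<forall>z\<in>Z. Re z < 0"
  shows "\<exists>a b. a > 1 \<and> b > 0 \<and> (\<forall>z\<in>Z. cmod (complex_of_real a + complex_of_real b * z) < 1)"
proof -
  have zpos: "cmod z > 0" if "z \<in> Z" for z
    using neg that by (metis less_irrefl zero_complex.simps(1) zero_less_norm_iff)
  define b where "b = Min (insert 1 ((\<lambda>z. - Re z / (cmod z)^2) ` Z))"
  have bpos: "b > 0" unfolding b_def using fin neg zpos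
    by (subst Min_gr_iff) (auto simp: divide_neg_pos)
  have bz: "b \<le> - Re z / (cmod z)^2" if "z \<in> Z" for z
    unfolding b_def using fin that by (intro Min_le) auto
  have e1: "cmod (1 + complex_of_real b * z)^2 \<le> 1 + b * Re z" if z: "z \<in> Z" for z
  proof -
    have b1: "b \<le> (- Re z) / (cmod z)^2" using bz[OF z] by simp
    have "b * (cmod z)^2 \<le> - Re z"
      by (metis b1 pos_le_divide_eq zero_less_power zpos[OF z])
    hence "b * (b * (cmod z)^2) \<le> b * (- Re z)" using bpos by (intro mult_left_mono) auto
    moreover have "cmod (1 + complex_of_real b * z)^2 = 1 + 2 * b * Re z + b * (b * (cmod z)^2)"
      unfolding cmod_power2 by (simp add: power2_eq_square algebra_simps)
    ultimately show ?thesis by (simp add: algebra_simps)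
  qed
  define e where "e = Min (insert 1 ((\<lambda>z. - b * Re z) ` Z))"
  have epos: "e > 0" unfolding e_def using fin neg bpos
    by (subst Min_gr_iff) (auto intro!: mult_pos_neg)
  have ele: "e \<le> 1" unfolding e_def using fin by (intro Min_le) auto
  have ez: "e \<le> - b * Re z" if "z \<in> Z" for z
    unfolding e_def using fin that by (intro Min_le) auto
  define s where "s = sqrt (1 - e)"
  have s1: "s < 1" "s \<ge> 0" unfolding s_def using epos ele by auto
  have cz: "cmod (1 + complex_of_real b * z) \<le> s" if z: "z \<in> Z" for z
    unfolding s_def using e1[OF z] ez[OF z] by (intro real_le_rsqrt) auto
  define a where "a = 1 + (1 - s) / 2"
  have "a > 1" unfolding a_def using s1 by auto
  moreover have "cmod (complex_of_real a + complex_of_real b * z) < 1" if z: "z \<in> Z" for z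
  proof -
    have "complex_of_real a + complex_of_real b * z = complex_of_real (a - 1) + (1 + complex_of_real b * z)"
      by simp
    hence "cmod (complex_of_real a + complex_of_real b * z) \<le> cmod (complex_of_real (a - 1)) + cmod (1 + complex_of_real b * z)"
      by (metis norm_triangle_ineq)
    also have "cmod (complex_of_real (a - 1)) = (1 - s)/2"
      by (simp only: norm_of_real) (use s1 in \<open>simp add: a_def\<close>)
    also have "(1 - s)/2 + cmod (1 + complex_of_real b * z) \<le> (1 - s)/2 + s" using cz[OF z] by simp
    also have "\<dots> < 1" using s1 by (simp add: field_simps)
    finally show ?thesis .
  qed
  ultimately show ?thesis using bpos by blast
qed

lemma key_decay:
  fixes Mm :: "real^'n^'n"
  assumes H: "hurwitz Mm"
  shows "\<exists>h>0. \<exists>N. \<forall>x. norm (((\<lambda>y. y + h *\<^sub>R (Mm *v y)) ^^ N) x) \<le> norm x / 2"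
proof -
  define n where "n = CARD('n)"
  have npos: "n > 0" unfolding n_def by simp
  obtain en :: "nat \<Rightarrow> 'n" where en: "bij_betw en {0..<n} UNIV"
    using ex_bij_betw_nat_finite[of "UNIV :: 'n set"] unfolding n_def by auto
  define ie where "ie = the_inv_into {0..<n} en"
  have ie1: "ie i < n" for i
    unfolding ie_def using the_inv_into_into[of en "{0..<n}" i "{0..<n}"] en by (auto simp: bij_betw_def)
  have ie2: "en (ie i) = i" for i
    unfolding ie_def using f_the_inv_into_f[of en "{0..<n}" i] en by (auto simp: bij_betw_def)
  have ie3: "ie (en k) = k" if "k < n" for k
    unfolding ie_def using en that by (simp add: bij_betw_def the_inv_into_f_f)
  have reidx: "(\<Sum>j\<in>UNIV. F j) = (\<Sum>k\<in>{0..<n}. F (en k))" for F :: "'n \<Rightarrow> 'b::comm_monoid_add"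
    using sum.reindex_bij_betw[OF en, of F] by simp
  define Mc :: "complex mat" where "Mc = Matrix.mat n n (\<lambda>(i,j). complex_of_real (Mm $ en i $ en j))"
  have Mccar: "Mc \<in> carrier_mat n n" unfolding Mc_def by simp
  have Mcv: "vec_index (Mc *\<^sub>v v) k = (\<Sum>j\<in>{0..<n}. complex_of_real (Mm $ en k $ en j) * vec_index v j)"
    if "k < n" "v \<in> carrier_vec n" for k v
    using that unfolding Mc_def by (simp add: scalar_prod_def)
  have ReZ: "Re z < 0" if ev: "eigenvalue Mc z" for z
  proof -
    obtain v where v: "v \<in> carrier_vec n" "v \<noteq> 0\<^sub>v n" "Mc *\<^sub>v v = z \<cdot>\<^sub>v v"
      using ev Mccar unfolding eigenvalue_def eigenvector_def by auto
    define w :: "complex^'n" where "w = (\<chi> i. vec_index v (ie i))"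
    define A :: "complex^'n^'n" where "A = Finite_Cartesian_Product.mat z - (\<chi> i j. complex_of_real (Mm $ i $ j))"
    have Aw: "A *v w = 0"
    proof -
      have "vec_nth (A *v w) i = 0" for i
      proof -
        have "vec_nth (A *v w) i = z * vec_index v (ie i) - (\<Sum>j\<in>UNIV. complex_of_real (Mm $ i $ j) * vec_index v (ie j))"
          unfolding A_def w_def matrix_vector_mult_def Finite_Cartesian_Product.mat_def
          by (simp add: left_diff_distrib sum_subtractf if_distrib[of "\<lambda>x. x * _"] cong: if_cong)
        also have "(\<Sum>j\<in>UNIV. complex_of_real (Mm $ i $ j) * vec_index v (ie j))
             = (\<Sum>k\<in>{0..<n}. complex_of_real (Mm $ en (ie i) $ en k) * vec_index v k)"
          by (subst reidx) (simp add: ie2 ie3)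
        also have "\<dots> = vec_index (Mc *\<^sub>v v) (ie i)" using Mcv[OF ie1 v(1)] by simp
        also have "\<dots> = z * vec_index v (ie i)" using v ie1[of i] by simp
        finally show ?thesis by simp
      qed
      thus ?thesis by (simp add: Finite_Cartesian_Product.vec_eq_iff)
    qed
    have wnz: "w \<noteq> 0"
    proof
      assume "w = 0"
      hence "vec_index v k = 0" if "k < n" for k
        using that unfolding w_def Finite_Cartesian_Product.vec_eq_iff by (metis ie3 vec_lambda_beta zero_index)
      hence "v = 0\<^sub>v n" using v(1) by (intro eq_vecI) auto
      thus False using v(2) by simp
    qed
    have "Determinants.det A = 0"
    proof (rule ccontr)
      assume "Determinants.det A \<noteq> 0"
      hence "invertible A" by (simp add: invertible_det_nz)
      hence "inj ((*v) A)" by (rule inj_matrix_vector_mult)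
      hence "w = 0" using Aw by (metis injD matrix_vector_mult_0_right)
      thus False using wnz by simp
    qed
    thus ?thesis using H unfolding hurwitz_def A_def by blast
  qed
  have finZ: "finite (spectrum Mc)" using card_finite_spectrum[OF Mccar] by simp
  obtain a b where ab: "a > 1" "b > 0"
    "\<forall>z\<in>spectrum Mc. cmod (complex_of_real a + complex_of_real b * z) < 1"
    using exists_ab[OF finZ] ReZ unfolding spectrum_def by auto
  define B :: "complex mat" where
    "B = Matrix.mat n n (\<lambda>(i,j). (if i = j then complex_of_real a else 0) + complex_of_real b * Mc $$ (i,j))"
  have Bcar: "B \<in> carrier_mat n n" unfolding B_def by simp
  have Bv: "vec_index (B *\<^sub>v v) k = complex_of_real a * vec_index v k + complex_of_real b * vec_index (Mc *\<^sub>v v) k"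
    if k: "k < n" and v: "v \<in> carrier_vec n" for k v
  proof -
    have "vec_index (B *\<^sub>v v) k = (\<Sum>j\<in>{0..<n}. ((if k = j then complex_of_real a else 0) + complex_of_real b * Mc $$ (k,j)) * vec_index v j)"
      using k v unfolding B_def by (simp add: scalar_prod_def)
    also have "\<dots> = (\<Sum>j\<in>{0..<n}. (if k = j then complex_of_real a * vec_index v j else 0)) + complex_of_real b * (\<Sum>j\<in>{0..<n}. Mc $$ (k,j) * vec_index v j)"
      by (simp add: distrib_right sum.distrib sum_distrib_left mult.assoc if_distrib[of "\<lambda>x. x * _"] cong: if_cong)
    also have "\<dots> = complex_of_real a * vec_index v k + complex_of_real b * vec_index (Mc *\<^sub>v v) k"
      using k v Mccar by (simp add: scalar_prod_def)
    finally show ?thesis .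
  qed
  have evB: "cmod mu < 1" if ev: "eigenvalue B mu" for mu
  proof -
    obtain v where v: "v \<in> carrier_vec n" "v \<noteq> 0\<^sub>v n" "B *\<^sub>v v = mu \<cdot>\<^sub>v v"
      using ev Bcar unfolding eigenvalue_def eigenvector_def by auto
    define z where "z = (mu - complex_of_real a) / complex_of_real b"
    have "Mc *\<^sub>v v = z \<cdot>\<^sub>v v"
    proof (rule eq_vecI)
      fix k assume "k < dim_vec (z \<cdot>\<^sub>v v)"
      hence k: "k < n" using v by simp
      have "complex_of_real a * vec_index v k + complex_of_real b * vec_index (Mc *\<^sub>v v) k = mu * vec_index v k"
        using Bv[OF k v(1)] v(3) k v(1) by (metis carrier_vecD index_smult_vec(1))
      thus "vec_index (Mc *\<^sub>v v) k = vec_index (z \<cdot>\<^sub>v v) k"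
        using k v ab(2) unfolding z_def by (simp add: field_simps)
    qed (use v Mccar in auto)
    hence "z \<in> spectrum Mc" unfolding spectrum_def eigenvalue_def eigenvector_def using v Mccar by auto
    hence "cmod (complex_of_real a + complex_of_real b * z) < 1" using ab by auto
    moreover have "complex_of_real a + complex_of_real b * z = mu" unfolding z_def using ab(2) by simp
    ultimately show ?thesis by simp
  qed
  have "spectral_radius B < 1"
    using spectral_radius_mem_max(1)[OF Bcar npos] evB unfolding spectrum_def by auto
  then obtain c where c: "\<forall>k. norm_bound (B ^\<^sub>m k) c"
    using spectral_radius_jnf_norm_bound_less_1_upper_triangular[OF Bcar] by auto
  have cnn: "c \<ge> 0"
  proof -
    have eq: "B ^\<^sub>m 0 = 1\<^sub>m n" using Bcar by simp
    have "norm_bound (1\<^sub>m n :: complex mat) c" using spec[OF c, of 0] eq by simp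
    hence "\<forall>i<n. \<forall>j<n. cmod ((1\<^sub>m n :: complex mat) $$ (i,j)) \<le> c" unfolding norm_bound_def by simp
    hence "cmod ((1\<^sub>m n :: complex mat) $$ (0,0)) \<le> c" using npos by blast
    thus ?thesis using npos by simp
  qed
  define h where "h = b / a"
  define f where "f = (\<lambda>y::real^'n. y + h *\<^sub>R (Mm *v y))"
  define tv where "tv = (\<lambda>y::real^'n. Matrix.vec n (\<lambda>k. complex_of_real (y $ en k)))"
  have tvcar: "tv y \<in> carrier_vec n" for y unfolding tv_def by simp
  have Mctv: "Mc *\<^sub>v tv y = tv (Mm *v y)" for y
  proof (rule eq_vecI)
    fix k assume "k < dim_vec (tv (Mm *v y))"
    hence k: "k < n" unfolding tv_def by simp
    have "vec_index (Mc *\<^sub>v tv y) k = (\<Sum>j\<in>{0..<n}. complex_of_real (Mm $ en k $ en j) * complex_of_real (y $ en j))"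
      using Mcv[OF k tvcar] by (simp add: tv_def)
    also have "\<dots> = complex_of_real (\<Sum>j\<in>UNIV. Mm $ en k $ j * y $ j)"
      by (subst reidx) simp
    also have "\<dots> = vec_index (tv (Mm *v y)) k" using k unfolding tv_def matrix_vector_mult_def by simp
    finally show "vec_index (Mc *\<^sub>v tv y) k = vec_index (tv (Mm *v y)) k" .
  qed (use Mccar in \<open>auto simp: tv_def\<close>)
  have F1: "tv (f y) = (1/complex_of_real a) \<cdot>\<^sub>v (B *\<^sub>v tv y)" for y
  proof (rule eq_vecI)
    fix k assume "k < dim_vec ((1/complex_of_real a) \<cdot>\<^sub>v (B *\<^sub>v tv y))"
    hence k: "k < n" using Bcar by simp
    have "vec_index ((1/complex_of_real a) \<cdot>\<^sub>v (B *\<^sub>v tv y)) k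
        = (1/complex_of_real a) * (complex_of_real a * complex_of_real (y $ en k) + complex_of_real b * complex_of_real ((Mm *v y) $ en k))"
      using k Bcar Bv[OF k tvcar] Mctv[of y] by (simp add: tv_def)
    also have "\<dots> = complex_of_real (y $ en k + h * (Mm *v y) $ en k)"
      using ab(1) unfolding h_def by (simp add: field_simps)
    also have "\<dots> = vec_index (tv (f y)) k" using k unfolding tv_def f_def by simp
    finally show "vec_index (tv (f y)) k = vec_index ((1/complex_of_real a) \<cdot>\<^sub>v (B *\<^sub>v tv y)) k" by simp
  qed (use Bcar in \<open>auto simp: tv_def\<close>)
  have F2: "tv ((f ^^ k) x) = ((1/complex_of_real a)^k) \<cdot>\<^sub>v ((B ^\<^sub>m k) *\<^sub>v tv x)" for k x
  proof (induction k arbitrary: x)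
    case 0
    show ?case using tvcar[of x] Bcar by simp
  next
    case (Suc k)
    have "tv ((f ^^ Suc k) x) = tv ((f ^^ k) (f x))" by (simp add: funpow_swap1)
    also have "\<dots> = ((1/complex_of_real a)^k) \<cdot>\<^sub>v ((B ^\<^sub>m k) *\<^sub>v ((1/complex_of_real a) \<cdot>\<^sub>v (B *\<^sub>v tv x)))"
      using Suc F1 by simp
    also have "\<dots> = ((1/complex_of_real a)^k) \<cdot>\<^sub>v ((1/complex_of_real a) \<cdot>\<^sub>v ((B ^\<^sub>m k) *\<^sub>v (B *\<^sub>v tv x)))"
      using Bcar tvcar[of x] by (subst mult_mat_vec[of _ n n]) auto
    also have "\<dots> = ((1/complex_of_real a)^Suc k) \<cdot>\<^sub>v ((B ^\<^sub>m Suc k) *\<^sub>v tv x)"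
    proof -
      have Bk: "B ^\<^sub>m k \<in> carrier_mat n n" by (intro carrier_matI) (use Bcar in auto)
      have "(B ^\<^sub>m k * B) *\<^sub>v tv x = B ^\<^sub>m k *\<^sub>v (B *\<^sub>v tv x)"
        by (rule assoc_mult_mat_vec[OF Bk Bcar tvcar])
      thus ?thesis by (simp add: smult_smult_assoc)
    qed
    finally show ?case .
  qed
  have F3: "norm ((f ^^ k) x) \<le> real n * (real n * c * (1/a)^k * norm x)" for k x
  proof -
    have comp: "\<bar>(f ^^ k) x $ i\<bar> \<le> real n * c * (1/a)^k * norm x" for i
    proof -
      have "complex_of_real (\<bar>(f ^^ k) x $ i\<bar>) = cmod (vec_index (tv ((f ^^ k) x)) (ie i))"
        using ie1[of i] ie2[of i] unfolding tv_def by simp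
      have "\<bar>(f ^^ k) x $ i\<bar> = cmod (vec_index (tv ((f ^^ k) x)) (ie i))"
        using ie1[of i] ie2[of i] unfolding tv_def by simp
      also have "\<dots> = (1/a)^k * cmod (vec_index ((B ^\<^sub>m k) *\<^sub>v tv x) (ie i))"
        using ie1[of i] Bcar ab(1) by (simp add: F2 norm_mult norm_power norm_divide)
      also have "cmod (vec_index ((B ^\<^sub>m k) *\<^sub>v tv x) (ie i)) = cmod (\<Sum>j\<in>{0..<n}. (B ^\<^sub>m k) $$ (ie i, j) * complex_of_real (x $ en j))"
        using ie1[of i] Bcar by (simp add: scalar_prod_def tv_def)
      also have "\<dots> \<le> (\<Sum>j\<in>{0..<n}. cmod ((B ^\<^sub>m k) $$ (ie i, j) * complex_of_real (x $ en j)))"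
        by (rule norm_sum)
      also have "\<dots> \<le> (\<Sum>j\<in>{0..<n}. c * norm x)"
      proof (rule sum_mono)
        fix j assume "j \<in> {0..<n}"
        hence "cmod ((B ^\<^sub>m k) $$ (ie i, j)) \<le> c" using c ie1[of i] Bcar unfolding norm_bound_def by auto
        moreover have "\<bar>x $ en j\<bar> \<le> norm x" by (rule component_le_norm_cart)
        ultimately show "cmod ((B ^\<^sub>m k) $$ (ie i, j) * complex_of_real (x $ en j)) \<le> c * norm x"
          by (simp add: norm_mult mult_mono')
      qed
      also have "\<dots> = real n * c * norm x" by simp
      finally show ?thesis using ab(1) by (simp add: mult_left_mono mult.assoc mult.left_commute)
    qed
    have "norm ((f ^^ k) x) \<le> (\<Sum>i\<in>UNIV. \<bar>(f ^^ k) x $ i\<bar>)" by (rule norm_le_l1_cart)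
    also have "\<dots> \<le> of_nat (card (UNIV::'n set)) * (real n * c * (1/a)^k * norm x)"
      by (rule sum_bounded_above) (rule comp)
    finally show ?thesis unfolding n_def by simp
  qed
  obtain N where N: "(1/a)^N < 1 / (2 * (real n * real n * c + 1))"
  proof -
    have "real n * real n * c \<ge> 0" using cnn by simp
    hence pos: "1 / (2 * (real n * real n * c + 1)) > 0" by simp
    have "1/a < 1" using ab(1) by simp
    thus ?thesis using real_arch_pow_inv[OF pos, of "1/a"] that by blast
  qed
  have "norm ((f ^^ N) x) \<le> norm x / 2" for x
  proof -
    have "norm ((f ^^ N) x) \<le> (real n * real n * c) * (1/a)^N * norm x"
      using F3[of N x] by (simp add: mult.assoc mult.left_commute)
    also have "\<dots> \<le> (real n * real n * c + 1) * (1/a)^N * norm x"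
      by (intro mult_right_mono) (use ab(1) in auto)
    also have "\<dots> \<le> (real n * real n * c + 1) * (1 / (2 * (real n * real n * c + 1))) * norm x"
      using N cnn by (intro mult_right_mono mult_left_mono) auto
    also have "\<dots> = norm x / 2"
    proof -
      define X where "X = real n * real n * c"
      have "X \<ge> 0" unfolding X_def using cnn by simp
      hence h1: "(X + 1) * (1 / (2 * (X + 1))) = 1/2" by simp
      show ?thesis unfolding X_def[symmetric] by (subst h1) simp
    qed
    finally show ?thesis .
  qed
  moreover have "h > 0" unfolding h_def using ab by simp
  ultimately show ?thesis unfolding f_def by blast
qed

lemma hvd_inner_self:
  fixes y :: "real \<Rightarrow> 'a::real_inner"
  assumes "(y has_vector_derivative D) (at u)"
  shows "((\<lambda>u. inner (y u) (y u)) has_real_derivative 2 * inner (y u) D) (at u)"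
proof -
  have d: "(y has_derivative (\<lambda>h. h *\<^sub>R D)) (at u)" using assms by (simp add: has_vector_derivative_def)
  have "((\<lambda>u. inner (y u) (y u)) has_derivative (\<lambda>h. inner (y u) (h *\<^sub>R D) + inner (h *\<^sub>R D) (y u))) (at u)"
    by (rule has_derivative_inner[OF d d])
  moreover have "(\<lambda>h. inner (y u) (h *\<^sub>R D) + inner (h *\<^sub>R D) (y u)) = (*) (2 * inner (y u) D)"
    by (auto simp: fun_eq_iff inner_commute algebra_simps)
  ultimately show ?thesis unfolding has_field_derivative_def by simp
qed

lemma lyap:
  fixes Mm :: "real^'n^'n" and h :: real and N :: nat
  assumes hpos: "h > 0" and key: "\<forall>x. norm (((\<lambda>y. y + h *\<^sub>R (Mm *v y)) ^^ N) x) \<le> norm x / 2"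
  shows "\<exists>L\<ge>1. \<exists>\<beta>>0. \<forall>g\<ge>0. \<forall>(x::real\<Rightarrow>real^'n) s t. s \<le> t \<longrightarrow> continuous_on {s..t} x \<longrightarrow>
     (\<forall>u. s < u \<and> u < t \<longrightarrow> (x has_vector_derivative g *\<^sub>R (Mm *v x u)) (at u)) \<longrightarrow>
     norm (x t)^2 \<le> L * exp (- g * \<beta> * (t - s)) * norm (x s)^2"
proof -
  define f where "f = (\<lambda>y::real^'n. y + h *\<^sub>R (Mm *v y))"
  define F where "F = (\<lambda>k. f ^^ k)"
  have linM: "linear ((*v) Mm)" by (simp add: bounded_linear.linear)
  have linf: "linear f" unfolding f_def
    by (rule linearI) (simp_all add: linear_add[OF linM] linear_scale[OF linM] algebra_simps)
  have linF: "linear (F k)" for k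
  proof (induction k)
    case 0
    have "linear (\<lambda>a::real^'n. a)" by (rule linearI) auto
    then show ?case by (simp add: F_def)
  next
    case (Suc k)
    show ?case using linear_compose[OF Suc linf] by (simp add: F_def o_def)
  qed
  have blF: "bounded_linear (F k)" for k using linF[of k] by (simp add: linear_conv_bounded_linear)
  obtain K where K: "K > 0" "\<And>y. norm (Mm *v y) \<le> norm y * K"
    using bounded_linear.pos_bounded[OF matrix_vector_mul_bounded_linear[of Mm]] by blast
  define C where "C = 1 + h * K"
  have fC: "norm (f y) \<le> C * norm y" for y
  proof -
    have "norm (f y) \<le> norm y + h * norm (Mm *v y)" unfolding f_def using hpos
      by (metis abs_of_pos norm_scaleR norm_triangle_ineq)
    also have "\<dots> \<le> norm y + h * (norm y * K)" using K(2)[of y] hpos by (intro add_left_mono mult_left_mono) auto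
    finally show ?thesis unfolding C_def by (simp add: algebra_simps)
  qed
  have Cpos: "C \<ge> 1" unfolding C_def using hpos K by simp
  have FC: "norm (F k y) \<le> C^k * norm y" for k y
  proof (induction k)
    case 0 then show ?case by (simp add: F_def)
  next
    case (Suc k)
    have "norm (F (Suc k) y) = norm (f (F k y))" by (simp add: F_def)
    also have "\<dots> \<le> C * norm (F k y)" by (rule fC)
    also have "\<dots> \<le> C * (C^k * norm y)" using Suc Cpos by (intro mult_left_mono) auto
    finally show ?case by simp
  qed
  have keyF: "norm (F N y) \<le> norm y / 2" for y using key unfolding F_def f_def by simp
  have Npos: "N > 0"
  proof (rule ccontr)
    assume "\<not> N > 0"
    hence "N = 0" by simp
    hence "norm (1::real^'n) \<le> norm (1::real^'n) / 2" using keyF[of 1] by (simp add: F_def)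
    moreover have "(1::real^'n) \<noteq> 0" by (simp add: Finite_Cartesian_Product.vec_eq_iff)
    ultimately show False by simp
  qed
  define V where "V = (\<lambda>y. \<Sum>k<N. inner (F k y) (F k y))"
  define Bf where "Bf = (\<lambda>y z. \<Sum>k<N. inner (F k y) (F k z))"
  have Vlow: "norm y ^ 2 \<le> V y" for y
  proof -
    obtain N' where N': "N = Suc N'" using Npos by (cases N) auto
    have "V y = inner y y + (\<Sum>k<N'. inner (F (Suc k) y) (F (Suc k) y))"
      unfolding V_def N' by (subst sum.lessThan_Suc_shift) (simp add: F_def)
    moreover have "(\<Sum>k<N'. inner (F (Suc k) y) (F (Suc k) y)) \<ge> 0" by (intro sum_nonneg) simp
    ultimately show ?thesis by (simp add: power2_norm_eq_inner)
  qed
  define L where "L = (\<Sum>k<N. (C^k)^2)"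
  have Vup: "V y \<le> L * norm y ^ 2" for y
  proof -
    have "V y = (\<Sum>k<N. norm (F k y) ^ 2)" unfolding V_def by (simp add: power2_norm_eq_inner)
    also have "\<dots> \<le> (\<Sum>k<N. (C^k * norm y)^2)"
      by (intro sum_mono power_mono FC) simp
    also have "\<dots> = L * norm y ^ 2" unfolding L_def by (simp add: sum_distrib_right power_mult_distrib)
    finally show ?thesis .
  qed
  have L1: "L \<ge> 1"
  proof -
    have "norm (1::real^'n) ^2 \<le> L * norm (1::real^'n)^2" using Vlow Vup order_trans by blast
    moreover have "(1::real^'n) \<noteq> 0" by (simp add: Finite_Cartesian_Product.vec_eq_iff)
    ultimately show ?thesis by simp
  qed
  have Vnn: "V y \<ge> 0" for y using Vlow[of y] by (metis order_trans zero_le_power2)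
  have Vshift: "V (f y) = V y - norm y ^ 2 + norm (F N y) ^ 2" for y
  proof -
    have "V (f y) = (\<Sum>k<N. inner (F (Suc k) y) (F (Suc k) y))"
      unfolding V_def F_def by (simp add: funpow_swap1)
    moreover have "(\<Sum>k<Suc N. inner (F k y) (F k y)) = inner y y + (\<Sum>k<N. inner (F (Suc k) y) (F (Suc k) y))"
      by (subst sum.lessThan_Suc_shift) (simp add: F_def)
    moreover have "(\<Sum>k<Suc N. inner (F k y) (F k y)) = V y + inner (F N y) (F N y)"
      unfolding V_def by simp
    ultimately show ?thesis by (simp add: power2_norm_eq_inner)
  qed
  have Vexp: "V (y + h *\<^sub>R z) = V y + 2 * h * Bf y z + h^2 * V z" for y z
  proof -
    have "V (y + h *\<^sub>R z) = (\<Sum>k<N. inner (F k y) (F k y) + 2 * h * inner (F k y) (F k z) + h^2 * inner (F k z) (F k z))"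
      unfolding V_def using linF
      by (intro sum.cong refl) (simp add: linear_add linear_scale inner_add_left inner_add_right inner_commute[of "F _ z" "F _ y"] power2_eq_square algebra_simps)
    thus ?thesis unfolding V_def Bf_def by (simp add: sum.distrib sum_distrib_left)
  qed
  define \<alpha> where "\<alpha> = 3 / (8 * h)"
  have Bneg: "Bf y (Mm *v y) \<le> - \<alpha> * norm y ^ 2" for y
  proof -
    have "V (f y) = V y + 2 * h * Bf y (Mm *v y) + h^2 * V (Mm *v y)" unfolding f_def by (rule Vexp)
    moreover have "norm (F N y) ^ 2 \<le> (norm y / 2)^2" using keyF[of y] by (intro power_mono) auto
    moreover have "h^2 * V (Mm *v y) \<ge> 0" using Vnn by simp
    ultimately have "2 * h * Bf y (Mm *v y) \<le> - (3/4) * norm y ^ 2"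
      using Vshift[of y] by (simp add: power_divide)
    hence "Bf y (Mm *v y) * (2 * h) \<le> - (3/4) * norm y ^ 2" by (simp add: mult.commute)
    hence "Bf y (Mm *v y) \<le> (- (3/4) * norm y ^ 2) / (2 * h)" using hpos by (subst pos_le_divide_eq) auto
    moreover have "(- (3/4) * norm y ^ 2) / (2 * h) = - \<alpha> * norm y ^ 2" unfolding \<alpha>_def using hpos by (simp add: field_simps)
    ultimately show ?thesis by simp
  qed
  define \<beta> where "\<beta> = 2 * \<alpha> / L"
  have \<beta>pos: "\<beta> > 0" unfolding \<beta>_def \<alpha>_def using hpos L1 by simp
  have Bscale: "Bf y (g *\<^sub>R z) = g * Bf y z" for y z g
    unfolding Bf_def using linF by (simp add: linear_scale sum_distrib_left)
  have Vderiv: "((\<lambda>u. V (x u)) has_real_derivative 2 * Bf (x u) D) (at u)"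
    if "(x has_vector_derivative D) (at u)" for x :: "real \<Rightarrow> real^'n" and D u
  proof -
    have "((\<lambda>u. F k (x u)) has_vector_derivative F k D) (at u)" for k
      by (rule bounded_linear.has_vector_derivative[OF blF that])
    hence "((\<lambda>u. inner (F k (x u)) (F k (x u))) has_real_derivative 2 * inner (F k (x u)) (F k D)) (at u)" for k
      by (rule hvd_inner_self)
    hence "((\<lambda>u. \<Sum>k<N. inner (F k (x u)) (F k (x u))) has_real_derivative (\<Sum>k<N. 2 * inner (F k (x u)) (F k D))) (at u)"
      by (intro DERIV_sum) auto
    thus ?thesis unfolding V_def Bf_def by (simp add: sum_distrib_left)
  qed
  have Vcont: "continuous_on S (\<lambda>u. V (x u))" if "continuous_on S x" for S and x :: "real \<Rightarrow> real^'n"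
    unfolding V_def
    by (intro continuous_intros linear_continuous_on_compose[OF that linF])
  have main: "norm (x t)^2 \<le> L * exp (- g * \<beta> * (t - s)) * norm (x s)^2"
    if g: "g \<ge> 0" and st: "s \<le> t" and xc: "continuous_on {s..t} x"
      and xd: "\<forall>u. s < u \<and> u < t \<longrightarrow> (x has_vector_derivative g *\<^sub>R (Mm *v x u)) (at u)"
    for g and x :: "real \<Rightarrow> real^'n" and s t
  proof -
    define W where "W = (\<lambda>u. exp (g * \<beta> * u) * V (x u))"
    have "W t \<le> W s"
    proof (rule DERIV_nonpos_imp_decreasing_open[OF st])
      fix u assume u: "s < u" "u < t"
      have dV: "((\<lambda>u. V (x u)) has_real_derivative 2 * Bf (x u) (g *\<^sub>R (Mm *v x u))) (at u)"
        using xd u by (intro Vderiv) auto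
      have dW: "(W has_real_derivative (g * \<beta> * exp (g * \<beta> * u) * V (x u) + exp (g * \<beta> * u) * (2 * Bf (x u) (g *\<^sub>R (Mm *v x u))))) (at u)"
        unfolding W_def by (auto intro!: derivative_eq_intros dV)
      have "g * \<beta> * exp (g * \<beta> * u) * V (x u) + exp (g * \<beta> * u) * (2 * Bf (x u) (g *\<^sub>R (Mm *v x u)))
          = exp (g * \<beta> * u) * g * (\<beta> * V (x u) + 2 * Bf (x u) (Mm *v x u))"
        by (simp add: Bscale algebra_simps)
      also have "\<dots> \<le> 0"
      proof -
        have "\<beta> * V (x u) \<le> \<beta> * (L * norm (x u)^2)" using Vup \<beta>pos by (intro mult_left_mono) auto
        also have "\<dots> = 2 * \<alpha> * norm (x u)^2" unfolding \<beta>_def using L1 by simp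
        finally have "\<beta> * V (x u) + 2 * Bf (x u) (Mm *v x u) \<le> 0" using Bneg[of "x u"] by simp
        thus ?thesis using g by (simp add: mult_nonneg_nonpos)
      qed
      finally show "\<exists>y. (W has_real_derivative y) (at u) \<and> y \<le> 0" using dW by blast
    next
      show "continuous_on {s..t} W" unfolding W_def by (intro continuous_intros Vcont xc)
    qed
    hence "exp (g * \<beta> * t) * V (x t) \<le> exp (g * \<beta> * s) * V (x s)" unfolding W_def .
    hence "V (x t) \<le> exp (g * \<beta> * s) * V (x s) / exp (g * \<beta> * t)" by (simp add: pos_le_divide_eq mult.commute)
    also have "\<dots> = exp (g * \<beta> * s - g * \<beta> * t) * V (x s)" by (simp add: exp_diff)
    also have "\<dots> = exp (- g * \<beta> * (t - s)) * V (x s)" by (simp add: algebra_simps)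
    also have "\<dots> \<le> exp (- g * \<beta> * (t - s)) * (L * norm (x s)^2)" by (intro mult_left_mono Vup) auto
    finally show ?thesis using Vlow[of "x t"] by (simp add: mult.assoc mult.left_commute)
  qed
  show ?thesis using L1 \<beta>pos main by blast
qed

lemma dwell_range:
  assumes "dwell_signal p tauD \<sigma>" "t \<ge> 0"
  shows "\<sigma> t \<in> {1..p}"
  using assms unfolding dwell_signal_def by blast

lemma sigma_const:
  fixes \<sigma> :: "real \<Rightarrow> nat"
  assumes dw: "dwell_signal p tauD \<sigma>" and s0: "0 \<le> s" and st: "s \<le> t"
    and nosw: "\<forall>u. s < u \<and> u < t \<longrightarrow> u \<notin> switch_times \<sigma>"
    and u: "s \<le> u" "u < t"
  shows "\<sigma> u = \<sigma> s"
proof (cases "u = s")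
  case True then show ?thesis by simp
next
  case False
  hence su: "s < u" using u by simp
  define S where "S = {s<..<t}"
  have range: "\<sigma> v \<in> {1..p}" if "v \<ge> 0" for v using dw that unfolding dwell_signal_def by blast
  have cont: "continuous_on S \<sigma>"
  proof -
    have "continuous (at v within S) \<sigma>" if v: "v \<in> S" for v
    proof -
      have "v > 0" "v \<notin> switch_times \<sigma>" using v s0 nosw unfolding S_def by auto
      hence "continuous (at v within {0..}) \<sigma>" unfolding switch_times_def by auto
      moreover have "S \<subseteq> {0..}" unfolding S_def using s0 by auto
      ultimately show ?thesis by (rule continuous_within_subset)
    qed
    thus ?thesis by (simp add: continuous_on_eq_continuous_within)
  qed
  have "(\<lambda>v. real (\<sigma> v)) constant_on S"
  proof (rule continuous_finite_range_constant)
    show "connected S" unfolding S_def by simp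
    show "continuous_on S (\<lambda>v. real (\<sigma> v))" by (intro continuous_on_of_nat cont)
    have "(\<lambda>v. real (\<sigma> v)) ` S \<subseteq> real ` {1..p}" using range s0 unfolding S_def by force
    thus "finite ((\<lambda>v. real (\<sigma> v)) ` S)" by (rule finite_subset) simp
  qed
  then obtain c where c: "\<forall>v\<in>S. real (\<sigma> v) = c" unfolding constant_on_def by blast
  have "continuous (at_right s) \<sigma>" using dw s0 unfolding dwell_signal_def by blast
  hence "(\<sigma> \<longlongrightarrow> \<sigma> s) (at_right s)" by (simp add: continuous_within)
  hence "eventually (\<lambda>v. \<sigma> v = \<sigma> s) (at_right s)" by (simp add: tendsto_discrete)
  then obtain b where b: "b > s" "\<forall>v>s. v < b \<longrightarrow> \<sigma> v = \<sigma> s" unfolding eventually_at_right_field by blast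
  define v where "v = (s + min b t) / 2"
  have "s < t" using u by simp
  hence v: "s < v" "v < b" "v < t" unfolding v_def using b by auto
  hence "\<sigma> v = \<sigma> s" using b by blast
  moreover have "v \<in> S" "u \<in> S" unfolding S_def using v su u by auto
  ultimately have "real (\<sigma> u) = real (\<sigma> s)" using c by metis
  thus ?thesis by simp
qed

lemma switching_bound:
  fixes \<sigma> :: "real \<Rightarrow> nat" and x :: "real \<Rightarrow> real^'n" and M :: "nat \<Rightarrow> real^'n^'n"
    and Q :: "real \<Rightarrow> real"
  assumes dw: "dwell_signal p tauD \<sigma>" and xc: "continuous_on {0..} x"
    and xd: "\<forall>t\<ge>0. t \<notin> switch_times \<sigma> \<longrightarrow>
              (x has_vector_derivative (g *\<^sub>R (M (\<sigma> t) *v x t))) (at t within {0..})"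
    and modes: "\<forall>i\<in>{1..p}. \<forall>(y::real\<Rightarrow>real^'n) s t. s \<le> t \<longrightarrow> continuous_on {s..t} y \<longrightarrow>
        (\<forall>u. s < u \<and> u < t \<longrightarrow> (y has_vector_derivative g *\<^sub>R (M i *v y u)) (at u)) \<longrightarrow>
        norm (y t)^2 \<le> Q (t - s) * norm (y s)^2"
    and Q1: "\<forall>l\<ge>tauD. Q l \<le> exp (-2*lam*l)"
    and Q2: "\<forall>l\<ge>0. Q l \<le> L * exp (-2*lam*l)" and L0: "L \<ge> 0"
  shows "\<forall>t\<ge>0. norm (x t)^2 \<le> L * exp (-2*lam*t) * norm (x 0)^2"
proof -
  define S0 where "S0 = insert 0 (switch_times \<sigma>)"
  have S0nn: "s \<ge> 0" if "s \<in> S0" for s using that unfolding S0_def switch_times_def by auto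
  have finS: "finite (S0 \<inter> {0..T})" for T
  proof -
    have "finite (switch_times \<sigma> \<inter> {0..T})" using dw unfolding dwell_signal_def by blast
    moreover have "S0 \<inter> {0..T} \<subseteq> insert 0 (switch_times \<sigma> \<inter> {0..T})" unfolding S0_def by auto
    ultimately show ?thesis by (meson finite_insert finite_subset)
  qed
  have sep: "tauD \<le> \<bar>s - t\<bar>" if "s \<in> S0" "t \<in> S0" "s \<noteq> t" for s t
    using dw that unfolding dwell_signal_def S0_def by blast
  have IL: "norm (x t)^2 \<le> Q (t - s) * norm (x s)^2"
    if s0: "0 \<le> s" and st: "s \<le> t" and nosw: "\<forall>u. s < u \<and> u < t \<longrightarrow> u \<notin> switch_times \<sigma>" for s t
  proof -
    have i: "\<sigma> s \<in> {1..p}" by (rule dwell_range[OF dw s0])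
    have c1: "continuous_on {s..t} x" by (rule continuous_on_subset[OF xc]) (use s0 in auto)
    have d1: "(x has_vector_derivative g *\<^sub>R (M (\<sigma> s) *v x u)) (at u)" if u: "s < u" "u < t" for u
    proof -
      have e: "\<sigma> u = \<sigma> s" by (rule sigma_const[OF dw s0 st nosw]) (use u in auto)
      have u0: "u \<ge> 0" using u s0 by simp
      have un: "u \<notin> switch_times \<sigma>" using nosw u by blast
      have "(x has_vector_derivative g *\<^sub>R (M (\<sigma> u) *v x u)) (at u within {0..})"
        using xd u0 un by (simp only: simp_thms)
      moreover have "u \<in> interior {0..}" using u s0 by simp
      hence "at u within {0..} = at u" by (rule at_within_interior)
      ultimately show ?thesis using e by simp
    qed
    have m: "\<forall>(y::real\<Rightarrow>real^'n) a b. a \<le> b \<longrightarrow> continuous_on {a..b} y \<longrightarrow>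
        (\<forall>u. a < u \<and> u < b \<longrightarrow> (y has_vector_derivative g *\<^sub>R (M (\<sigma> s) *v y u)) (at u)) \<longrightarrow>
        norm (y b)^2 \<le> Q (b - a) * norm (y a)^2" using modes i by (rule bspec)
    have d1': "\<forall>u. s < u \<and> u < t \<longrightarrow> (x has_vector_derivative g *\<^sub>R (M (\<sigma> s) *v x u)) (at u)"
      using d1 by (intro allI impI) (elim conjE)
    have m1: "s \<le> t \<longrightarrow> continuous_on {s..t} x \<longrightarrow>
        (\<forall>u. s < u \<and> u < t \<longrightarrow> (x has_vector_derivative g *\<^sub>R (M (\<sigma> s) *v x u)) (at u)) \<longrightarrow>
        norm (x t)^2 \<le> Q (t - s) * norm (x s)^2"
      using m by (elim allE)
    show ?thesis using mp[OF mp[OF mp[OF m1 st] c1] d1'] .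
  qed
  have SB: "\<forall>s\<in>S0. card (S0 \<inter> {0..<s}) \<le> m \<longrightarrow> norm (x s)^2 \<le> exp (-2*lam * s) * norm (x 0)^2" for m
  proof (induction m)
    case 0
    show ?case
    proof (intro ballI impI)
      fix s assume s: "s \<in> S0" and c: "card (S0 \<inter> {0..<s}) \<le> 0"
      have fin: "finite (S0 \<inter> {0..<s})" using finS[of s] by (rule finite_subset[rotated]) auto
      have "s = 0"
      proof (rule ccontr)
        assume "s \<noteq> 0"
        hence "0 \<in> S0 \<inter> {0..<s}" using S0nn[OF s] unfolding S0_def by auto
        hence "card (S0 \<inter> {0..<s}) > 0" using fin by (metis card_gt_0_iff empty_iff)
        thus False using c by simp
      qed
      thus "norm (x s)^2 \<le> exp (-2*lam * s) * norm (x 0)^2" by simp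
    qed
  next
    case (Suc m)
    show ?case
    proof (intro ballI impI)
      fix s assume s: "s \<in> S0" and c: "card (S0 \<inter> {0..<s}) \<le> Suc m"
      show "norm (x s)^2 \<le> exp (-2*lam * s) * norm (x 0)^2"
      proof (cases "s = 0")
        case True then show ?thesis by simp
      next
        case False
        define A where "A = S0 \<inter> {0..<s}"
        have fin: "finite A" unfolding A_def using finS[of s] by (rule finite_subset[rotated]) auto
        have "0 \<in> A" using S0nn[OF s] False unfolding A_def S0_def by auto
        hence ne: "A \<noteq> {}" by auto
        define s' where "s' = Max A"
        have s'A: "s' \<in> A" unfolding s'_def using fin ne by (rule Max_in)
        hence s'S: "s' \<in> S0" and s's: "s' < s" and s'0: "0 \<le> s'" unfolding A_def by auto
        have sub1: "S0 \<inter> {0..<s'} \<subseteq> A" unfolding A_def using s's by auto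
        have sub2: "s' \<notin> S0 \<inter> {0..<s'}" by simp
        have "S0 \<inter> {0..<s'} \<subset> A" using sub1 sub2 s'A by blast
        hence "card (S0 \<inter> {0..<s'}) < card A" by (rule psubset_card_mono[OF fin])
        hence "card (S0 \<inter> {0..<s'}) \<le> m" using c unfolding A_def by simp
        hence IH: "norm (x s')^2 \<le> exp (-2*lam * s') * norm (x 0)^2" using Suc s'S by blast
        have nosw: "\<forall>u. s' < u \<and> u < s \<longrightarrow> u \<notin> switch_times \<sigma>"
        proof (intro allI impI)
          fix u assume u: "s' < u \<and> u < s"
          show "u \<notin> switch_times \<sigma>"
          proof
            assume "u \<in> switch_times \<sigma>"
            hence "u \<in> A" using u s'0 unfolding A_def S0_def by auto
            hence "u \<le> s'" unfolding s'_def by (rule Max_ge[OF fin])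
            thus False using u by simp
          qed
        qed
        have "tauD \<le> \<bar>s - s'\<bar>" using sep[OF s s'S] s's by simp
        hence dl: "tauD \<le> s - s'" using s's by simp
        have "norm (x s)^2 \<le> Q (s - s') * norm (x s')^2" using IL[OF s'0 _ nosw] s's by simp
        also have "\<dots> \<le> exp (-2*lam*(s - s')) * norm (x s')^2"
          using Q1 dl by (intro mult_right_mono) auto
        also have "\<dots> \<le> exp (-2*lam*(s - s')) * (exp (-2*lam * s') * norm (x 0)^2)"
          using IH by (intro mult_left_mono) auto
        also have "\<dots> = (exp (-2*lam*(s - s')) * exp (-2*lam * s')) * norm (x 0)^2"
          by (simp only: mult.assoc)
        also have "exp (-2*lam*(s - s')) * exp (-2*lam * s') = exp (-2*lam * s)"
          by (simp add: exp_add[symmetric] algebra_simps)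
        finally show ?thesis .
      qed
    qed
  qed
  show ?thesis
  proof (intro allI impI)
    fix t :: real assume t0: "t \<ge> 0"
    define A where "A = S0 \<inter> {0..t}"
    have fin: "finite A" unfolding A_def by (rule finS)
    have "0 \<in> A" using t0 unfolding A_def S0_def by auto
    hence ne: "A \<noteq> {}" by auto
    define s where "s = Max A"
    have sA: "s \<in> A" unfolding s_def using fin ne by (rule Max_in)
    hence sS: "s \<in> S0" and st: "s \<le> t" and s0: "0 \<le> s" unfolding A_def by auto
    have nosw: "\<forall>u. s < u \<and> u < t \<longrightarrow> u \<notin> switch_times \<sigma>"
    proof (intro allI impI)
      fix u assume u: "s < u \<and> u < t"
      show "u \<notin> switch_times \<sigma>"
      proof
        assume "u \<in> switch_times \<sigma>"
        hence "u \<in> A" using u s0 unfolding A_def S0_def by auto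
        hence "u \<le> s" unfolding s_def by (rule Max_ge[OF fin])
        thus False using u by simp
      qed
    qed
    have SBs: "norm (x s)^2 \<le> exp (-2*lam * s) * norm (x 0)^2" using SB sS by blast
    have "norm (x t)^2 \<le> Q (t - s) * norm (x s)^2" using IL[OF s0 st nosw] .
    also have "\<dots> \<le> L * exp (-2*lam*(t - s)) * norm (x s)^2"
      using Q2 st by (intro mult_right_mono) auto
    also have "\<dots> \<le> L * exp (-2*lam*(t - s)) * (exp (-2*lam * s) * norm (x 0)^2)"
      using SBs L0 by (intro mult_left_mono) auto
    also have "\<dots> = L * (exp (-2*lam*(t - s)) * exp (-2*lam * s)) * norm (x 0)^2"
      by (simp only: mult.assoc)
    also have "exp (-2*lam*(t - s)) * exp (-2*lam * s) = exp (-2*lam*t)"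
      by (simp add: exp_add[symmetric] algebra_simps)
    finally show "norm (x t)^2 \<le> L * exp (-2*lam*t) * norm (x 0)^2" .
  qed
qed

theorem lemma1:
  fixes M :: "nat \<Rightarrow> real^'n^'n" and p :: nat and tauD lam :: real
  assumes "\<forall>i\<in>{1..p}. hurwitz (M i)" and "tauD > 0" and "lam > 0"
  shows "\<exists>g0>0. \<forall>g\<ge>g0. \<exists>c>0. \<forall>\<sigma> (x :: real \<Rightarrow> real^'n).
           dwell_signal p tauD \<sigma> \<and> continuous_on {0..} x \<and>
           (\<forall>t\<ge>0. t \<notin> switch_times \<sigma> \<longrightarrow>
              (x has_vector_derivative (g *\<^sub>R (M (\<sigma> t) *v x t))) (at t within {0..}))
           \<longrightarrow> (\<forall>t\<ge>0. norm (x t) \<le> c * exp (- lam * t) * norm (x 0))"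
proof -
  define P where "P = (\<lambda>i (Lb::real\<times>real). fst Lb \<ge> 1 \<and> snd Lb > 0 \<and> (\<forall>g\<ge>0. \<forall>(x::real\<Rightarrow>real^'n) s t. s \<le> t \<longrightarrow> continuous_on {s..t} x \<longrightarrow>
     (\<forall>u. s < u \<and> u < t \<longrightarrow> (x has_vector_derivative g *\<^sub>R (M i *v x u)) (at u)) \<longrightarrow>
     norm (x t)^2 \<le> fst Lb * exp (- g * snd Lb * (t - s)) * norm (x s)^2))"
  have mode: "\<forall>i\<in>{1..p}. \<exists>Lb. P i Lb"
  proof
    fix i assume i: "i \<in> {1..p}"
    have H: "hurwitz (M i)" using assms(1) i by blast
    obtain h N where hN: "h > 0" "\<forall>x. norm (((\<lambda>y. y + h *\<^sub>R (M i *v y)) ^^ N) x) \<le> norm x / 2"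
      using key_decay[OF H] by blast
    define Q where "Q = (\<lambda>L \<beta>. \<forall>g\<ge>0. \<forall>(x::real\<Rightarrow>real^'n) s t. s \<le> t \<longrightarrow> continuous_on {s..t} x \<longrightarrow>
     (\<forall>u. s < u \<and> u < t \<longrightarrow> (x has_vector_derivative g *\<^sub>R (M i *v x u)) (at u)) \<longrightarrow>
     norm (x t)^2 \<le> L * exp (- g * \<beta> * (t - s)) * norm (x s)^2)"
    have "\<exists>L\<ge>1. \<exists>\<beta>>0. Q L \<beta>" unfolding Q_def by (rule lyap[OF hN])
    then obtain L where "L \<ge> 1 \<and> (\<exists>\<beta>>0. Q L \<beta>)" ..
    hence L1: "L \<ge> 1" and L2: "\<exists>\<beta>>0. Q L \<beta>" by auto
    from L2 obtain \<beta> where "\<beta> > 0 \<and> Q L \<beta>" ..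
    hence b: "\<beta> > 0" "Q L \<beta>" by auto
    have L: "L \<ge> 1" using L1 .
    have "P i (L, \<beta>)" unfolding P_def using L b unfolding Q_def by simp
    thus "\<exists>Lb. P i Lb" ..
  qed
  from bchoice[OF mode] obtain Lbf where Lbf: "\<forall>i\<in>{1..p}. P i (Lbf i)" ..
  define Lf where "Lf = (\<lambda>i. fst (Lbf i))"
  define \<beta>f where "\<beta>f = (\<lambda>i. snd (Lbf i))"
  have LB1: "Lf i \<ge> 1" "\<beta>f i > 0" if "i \<in> {1..p}" for i
    using bspec[OF Lbf that] unfolding P_def Lf_def \<beta>f_def by simp_all
  have LB2: "\<forall>g\<ge>0. \<forall>(x::real\<Rightarrow>real^'n) s t. s \<le> t \<longrightarrow> continuous_on {s..t} x \<longrightarrow>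
     (\<forall>u. s < u \<and> u < t \<longrightarrow> (x has_vector_derivative g *\<^sub>R (M i *v x u)) (at u)) \<longrightarrow>
     norm (x t)^2 \<le> Lf i * exp (- g * \<beta>f i * (t - s)) * norm (x s)^2" if "i \<in> {1..p}" for i
    using bspec[OF Lbf that] unfolding P_def Lf_def \<beta>f_def by (elim conjE)
  define L where "L = Max (insert 1 (Lf ` {1..p}))"
  define \<beta> where "\<beta> = Min (insert 1 (\<beta>f ` {1..p}))"
  have L1: "L \<ge> 1" unfolding L_def by (intro Max_ge) auto
  have LfL: "Lf i \<le> L" if "i \<in> {1..p}" for i unfolding L_def using that by (intro Max_ge) auto
  have \<beta>pos: "\<beta> > 0" unfolding \<beta>_def using LB1 by (subst Min_gr_iff) auto
  have \<beta>le: "\<beta> \<le> \<beta>f i" if "i \<in> {1..p}" for i unfolding \<beta>_def using that by (intro Min_le) auto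
  have modesLB: "\<forall>i\<in>{1..p}. \<forall>(y::real\<Rightarrow>real^'n) s t. s \<le> t \<longrightarrow> continuous_on {s..t} y \<longrightarrow>
        (\<forall>u. s < u \<and> u < t \<longrightarrow> (y has_vector_derivative g *\<^sub>R (M i *v y u)) (at u)) \<longrightarrow>
        norm (y t)^2 \<le> L * exp (- g * \<beta> * (t - s)) * norm (y s)^2" if g0: "g \<ge> 0" for g
  proof (intro ballI allI impI)
    fix i and y :: "real \<Rightarrow> real^'n" and s t
    assume i: "i \<in> {1..p}" and st: "s \<le> t" and yc: "continuous_on {s..t} y"
      and yd: "\<forall>u. s < u \<and> u < t \<longrightarrow> (y has_vector_derivative g *\<^sub>R (M i *v y u)) (at u)"
    note m0 = mp[OF spec[OF LB2[OF i], of g] g0]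
    note m1 = spec[OF spec[OF spec[OF m0, of y], of s], of t]
    have "norm (y t)^2 \<le> Lf i * exp (- g * \<beta>f i * (t - s)) * norm (y s)^2"
      using mp[OF mp[OF mp[OF m1 st] yc] yd] .
    also have "\<dots> \<le> L * exp (- g * \<beta> * (t - s)) * norm (y s)^2"
    proof (intro mult_right_mono mult_mono)
      show "Lf i \<le> L" using LfL[OF i] .
      have "g * \<beta> * (t - s) \<le> g * \<beta>f i * (t - s)"
        using \<beta>le[OF i] g0 st by (intro mult_right_mono mult_left_mono) auto
      thus "exp (- g * \<beta>f i * (t - s)) \<le> exp (- g * \<beta> * (t - s))" by simp
      show "0 \<le> L" using L1 by simp
    qed auto
    finally show "norm (y t)^2 \<le> L * exp (- g * \<beta> * (t - s)) * norm (y s)^2" .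
  qed
  have lnL: "ln L \<ge> 0" using L1 by simp
  define g0 where "g0 = (2 * lam + ln L / tauD) / \<beta> + 1"
  have g0pos: "g0 > 0" unfolding g0_def using assms(2,3) lnL \<beta>pos by (intro add_nonneg_pos divide_nonneg_pos) auto
  show ?thesis
  proof (rule exI[of _ g0], rule conjI[OF g0pos], intro allI impI)
    fix g assume gg: "g \<ge> g0"
    have gnn: "g \<ge> 0" using gg g0pos by simp
    have gb: "g * \<beta> \<ge> 2 * lam + ln L / tauD"
    proof -
      have "g0 * \<beta> \<le> g * \<beta>" using gg \<beta>pos by (intro mult_right_mono) auto
      moreover have "g0 * \<beta> = 2 * lam + ln L / tauD + \<beta>" unfolding g0_def using \<beta>pos by (simp add: field_simps)
      ultimately show ?thesis using \<beta>pos by simp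
    qed
    have Q1: "\<forall>l\<ge>tauD. L * exp (- g * \<beta> * l) \<le> exp (-2*lam*l)"
    proof (intro allI impI)
      fix l assume l: "l \<ge> tauD"
      have l0: "l \<ge> 0" using l assms(2) by simp
      have "l / tauD \<ge> 1" using l assms(2) by simp
      hence a1: "ln L * 1 \<le> ln L * (l / tauD)" using lnL by (intro mult_left_mono) auto
      have a2: "(2 * lam + ln L / tauD) * l \<le> g * \<beta> * l" using gb l0 by (intro mult_right_mono) auto
      have a3: "(2 * lam + ln L / tauD) * l = 2 * lam * l + ln L * (l / tauD)" by (simp add: algebra_simps)
      have "- g * \<beta> * l \<le> -2 * lam * l - ln L" using a1 a2 a3 by simp
      hence "exp (- g * \<beta> * l) \<le> exp (-2 * lam * l - ln L)" by simp
      also have "\<dots> = exp (-2 * lam * l) / L" using L1 by (simp add: exp_diff)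
      finally have "L * exp (- g * \<beta> * l) \<le> L * (exp (-2 * lam * l) / L)" using L1 by (intro mult_left_mono) auto
      also have "\<dots> = exp (-2 * lam * l)" using L1 by simp
      finally show "L * exp (- g * \<beta> * l) \<le> exp (-2*lam*l)" by simp
    qed
    have Q2: "\<forall>l\<ge>0. L * exp (- g * \<beta> * l) \<le> L * exp (-2*lam*l)"
    proof (intro allI impI)
      fix l :: real assume l0: "l \<ge> 0"
      have "ln L / tauD \<ge> 0" using lnL assms(2) by simp
      hence "2 * lam \<le> g * \<beta>" using gb by simp
      hence "2 * lam * l \<le> g * \<beta> * l" using l0 by (intro mult_right_mono) auto
      hence "exp (- g * \<beta> * l) \<le> exp (-2 * lam * l)" by simp
      thus "L * exp (- g * \<beta> * l) \<le> L * exp (-2*lam*l)" using L1 by (intro mult_left_mono) auto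
    qed
    show "\<exists>c>0. \<forall>\<sigma> (x :: real \<Rightarrow> real^'n).
           dwell_signal p tauD \<sigma> \<and> continuous_on {0..} x \<and>
           (\<forall>t\<ge>0. t \<notin> switch_times \<sigma> \<longrightarrow>
              (x has_vector_derivative (g *\<^sub>R (M (\<sigma> t) *v x t))) (at t within {0..}))
           \<longrightarrow> (\<forall>t\<ge>0. norm (x t) \<le> c * exp (- lam * t) * norm (x 0))"
    proof (rule exI[of _ "sqrt L"], rule conjI)
      show "sqrt L > 0" using L1 by simp
    next
      show "\<forall>\<sigma> (x :: real \<Rightarrow> real^'n).
           dwell_signal p tauD \<sigma> \<and> continuous_on {0..} x \<and>
           (\<forall>t\<ge>0. t \<notin> switch_times \<sigma> \<longrightarrow>
              (x has_vector_derivative (g *\<^sub>R (M (\<sigma> t) *v x t))) (at t within {0..}))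
           \<longrightarrow> (\<forall>t\<ge>0. norm (x t) \<le> sqrt L * exp (- lam * t) * norm (x 0))"
      proof (intro allI impI)
      fix \<sigma> :: "real \<Rightarrow> nat" and x :: "real \<Rightarrow> real^'n" and t :: real
      assume H: "dwell_signal p tauD \<sigma> \<and> continuous_on {0..} x \<and>
           (\<forall>t\<ge>0. t \<notin> switch_times \<sigma> \<longrightarrow>
              (x has_vector_derivative (g *\<^sub>R (M (\<sigma> t) *v x t))) (at t within {0..}))"
        and t0: "t \<ge> 0"
      have dw: "dwell_signal p tauD \<sigma>" using H by (rule conjunct1)
      have xc: "continuous_on {0..} x" using H by (elim conjE)
      have xd: "\<forall>t\<ge>0. t \<notin> switch_times \<sigma> \<longrightarrow>
              (x has_vector_derivative (g *\<^sub>R (M (\<sigma> t) *v x t))) (at t within {0..})" using H by (elim conjE)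
      have bound: "\<forall>t\<ge>0. norm (x t)^2 \<le> L * exp (-2*lam*t) * norm (x 0)^2"
        by (rule switching_bound[where Q="\<lambda>l. L * exp (- g * \<beta> * l)", OF dw xc xd modesLB[OF gnn] Q1 Q2]) (use L1 in simp)
      have nb: "norm (x t)^2 \<le> L * exp (-2*lam*t) * norm (x 0)^2" using bound t0 by blast
      have e1: "exp (- lam * t)^2 = exp (of_nat 2 * (- lam * t))" by (rule exp_of_nat_mult[symmetric])
      have e0: "(of_nat 2 :: real) * (- lam * t) = -2*lam*t" by simp
      have e2: "exp (- lam * t)^2 = exp (-2*lam*t)" using e1 e0 by simp
      have s2: "(sqrt L)^2 = L" using L1 by simp
      have sq: "(sqrt L * exp (- lam * t) * norm (x 0))^2 = L * exp (-2*lam*t) * norm (x 0)^2"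
        by (simp only: power_mult_distrib e2 s2)
      show "norm (x t) \<le> sqrt L * exp (- lam * t) * norm (x 0)"
      proof -
        have rhs0: "0 \<le> sqrt L * exp (- lam * t) * norm (x 0)"
          by (intro mult_nonneg_nonneg) (use L1 in auto)
        have "norm (x t)^2 \<le> (sqrt L * exp (- lam * t) * norm (x 0))^2" unfolding sq by (rule nb)
        thus ?thesis using rhs0 by (rule power2_le_imp_le)
      qed
      qed
    qed
  qed
qed

end
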